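(* For $x,y\in\mathrm{dS}^d$ the following are equivalent: (i) $(x,y)\in G_{\mathbb C}.(\Xi_+\times\Xi_+)$; (ii) $\beta(x,y)>-1$; (iii) $\beta(x-y,x-y)<0$. In particular $\{x\in\mathrm{dS}^d:(x,e_1)\in G_{\mathbb C}.(\Xi_+\times\Xi_+)\}=\{x\in\mathrm{dS}^d: x_1<1\}$.
   Context: Let $d\ge1$. On $\mathbb C^{1+d}$ (standard basis $e_0,\dots,e_d$) let $\beta(z,w)=z_0w_0-z_1w_1-\dots-z_dw_d$, $V=\mathbb R^{1+d}$, $V_+=\{x\in V:x_0>0,\beta(x,x)>0\}$, $\mathrm{dS}^d_{\mathbb C}=\{z:\beta(z,z)=-1\}$, $\mathrm{dS}^d=\mathrm{dS}^d_{\mathbb C}\cap V$ (de Sitter space), $\Xi_+=\mathrm{dS}^d_{\mathbb C}\cap(V+iV_+)$. $G_{\mathbb C}=\mathrm{SO}_{1+d}(\mathbb C)$ (determinant-one complex linear maps preserving $\beta$) acts on pairs by $g.(z,w)=(gz,\overline g w)$, where $\overline g$ is the entrywise complex conjugate. *)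

theory Defs
  imports "Jordan_Normal_Form.Determinant"
begin

(* Vectors in C^{1+d} / R^{1+d} are JNF vectors of dimension d+1, indices 0..d. *)

definition beta :: "nat \<Rightarrow> 'a::comm_ring_1 vec \<Rightarrow> 'a vec \<Rightarrow> 'a" where
  "beta d z w = z $ 0 * w $ 0 - (\<Sum>i\<in>{1..d}. z $ i * w $ i)"

definition Vplus :: "nat \<Rightarrow> real vec set" where
  "Vplus d = {x \<in> carrier_vec (d+1). x $ 0 > 0 \<and> beta d x x > 0}"

definition dSC :: "nat \<Rightarrow> complex vec set" where
  "dSC d = {z \<in> carrier_vec (d+1). beta d z z = -1}"

definition dS :: "nat \<Rightarrow> real vec set" where
  "dS d = {x \<in> carrier_vec (d+1). beta d x x = -1}"

definition XiPlus :: "nat \<Rightarrow> complex vec set" where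
  "XiPlus d = {z \<in> dSC d. map_vec Im z \<in> Vplus d}"

definition GC :: "nat \<Rightarrow> complex mat set" where
  "GC d = {g \<in> carrier_mat (d+1) (d+1). det g = 1 \<and>
      (\<forall>z \<in> carrier_vec (d+1). \<forall>w \<in> carrier_vec (d+1). beta d (g *\<^sub>v z) (g *\<^sub>v w) = beta d z w)}"

definition GXi :: "nat \<Rightarrow> (complex vec \<times> complex vec) set" where
  "GXi d = {(g *\<^sub>v z, map_mat cnj g *\<^sub>v w) | g z w. g \<in> GC d \<and> z \<in> XiPlus d \<and> w \<in> XiPlus d}"

abbreviation cvec :: "real vec \<Rightarrow> complex vec" where
  "cvec x \<equiv> map_vec complex_of_real x"

end

theory Submission
  imports Defs
begin


lemma beta_add_left: fixes u v w :: "'a::comm_ring_1 vec"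
  assumes "u \<in> carrier_vec (d+1)" "v \<in> carrier_vec (d+1)"
  shows "beta d (u + v) w = beta d u w + beta d v w"
  using assms by (simp add: beta_def algebra_simps sum.distrib)

lemma beta_sym: "beta d u w = beta d w u"
  by (simp add: beta_def mult.commute)

lemma beta_smult_left: fixes u w :: "'a::comm_ring_1 vec"
  assumes "u \<in> carrier_vec (d+1)"
  shows "beta d (a \<cdot>\<^sub>v u) w = a * beta d u w"
  using assms by (simp add: beta_def algebra_simps sum_distrib_left)

lemma beta_minus_left: fixes u v w :: "'a::comm_ring_1 vec"
  assumes "u \<in> carrier_vec (d+1)" "v \<in> carrier_vec (d+1)"
  shows "beta d (u - v) w = beta d u w - beta d v w"
  using assms by (simp add: beta_def algebra_simps sum_subtractf)



lemma key_ineq: fixes a b :: "nat \<Rightarrow> real" and S :: "nat set"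
  assumes fin: "finite S" and ha: "(\<Sum>i\<in>S. (a i)^2) < a0^2" and hb: "(\<Sum>i\<in>S. (b i)^2) < b0^2"
  shows "\<bar>\<Sum>i\<in>S. a i * b i\<bar> < \<bar>a0\<bar> * \<bar>b0\<bar>"
proof -
  have "0 \<le> (\<Sum>i\<in>S. (a i)^2)" by (intro sum_nonneg) auto
  with ha have a0: "a0 \<noteq> 0" by auto
  have "0 \<le> (\<Sum>i\<in>S. (b i)^2)" by (intro sum_nonneg) auto
  with hb have b0: "b0 \<noteq> 0" by auto
  define r where "r = \<bar>b0\<bar> / \<bar>a0\<bar>"
  have r: "r > 0" using a0 b0 by (simp add: r_def)
  have per: "2*\<bar>a i * b i\<bar> \<le> r * (a i)^2 + (b i)^2 / r" for i
  proof -
    have e: "(r*\<bar>a i\<bar> - \<bar>b i\<bar>)^2 / r = r*(a i)^2 + (b i)^2/r - 2*\<bar>a i\<bar>*\<bar>b i\<bar>"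
      using r by (simp add: power2_eq_square field_simps abs_mult_self_eq)
    have "0 \<le> (r*\<bar>a i\<bar> - \<bar>b i\<bar>)^2 / r" using r by simp
    hence "2*\<bar>a i\<bar>*\<bar>b i\<bar> \<le> r * (a i)^2 + (b i)^2 / r" unfolding e by simp
    thus ?thesis by (simp add: abs_mult)
  qed
  have "2*\<bar>\<Sum>i\<in>S. a i * b i\<bar> \<le> 2*(\<Sum>i\<in>S. \<bar>a i * b i\<bar>)" by (simp add: sum_abs)
  also have "\<dots> = (\<Sum>i\<in>S. 2*\<bar>a i * b i\<bar>)" by (simp add: sum_distrib_left)
  also have "\<dots> \<le> (\<Sum>i\<in>S. r * (a i)^2 + (b i)^2 / r)" by (intro sum_mono per)
  also have "\<dots> = r * (\<Sum>i\<in>S. (a i)^2) + (\<Sum>i\<in>S. (b i)^2) / r"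
    by (simp add: sum.distrib sum_distrib_left sum_divide_distrib)
  also have "\<dots> < r * a0^2 + b0^2 / r"
    using ha hb r by (intro add_strict_mono) (auto simp: divide_strict_right_mono)
  also have "\<dots> = 2 * (\<bar>a0\<bar> * \<bar>b0\<bar>)" using a0 b0
    by (simp add: r_def field_simps power2_eq_square abs_mult_self_eq flip: abs_mult)
  finally show ?thesis by simp
qed

lemma beta_self_real: "beta d (x::real vec) x = (x$0)^2 - (\<Sum>i\<in>{1..d}. (x$i)^2)"
  by (simp add: beta_def power2_eq_square)

lemma cone_pos: fixes a b :: "real vec"
  assumes "a$0 > 0" "b$0 > 0" "beta d a a > 0" "beta d b b > 0"
  shows "beta d a b > 0"
proof -
  have "\<bar>\<Sum>i\<in>{1..d}. a$i * b$i\<bar> < \<bar>a$0\<bar> * \<bar>b$0\<bar>"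
    using assms by (intro key_ineq) (auto simp: beta_self_real)
  thus ?thesis using assms by (simp add: beta_def)
qed

lemma timelike0: fixes a :: "real vec" assumes "beta d a a > 0" shows "a$0 \<noteq> 0"
proof
  assume "a$0 = 0"
  moreover have "0 \<le> (\<Sum>i\<in>{1..d}. (a$i)^2)" by (intro sum_nonneg) auto
  ultimately show False using assms by (simp add: beta_self_real)
qed

lemma orth_spacelike: fixes a v :: "real vec"
  assumes "beta d v v > 0" "beta d a v = 0"
  shows "beta d a a \<le> 0"
proof (rule ccontr)
  assume "\<not> ?thesis"
  hence "\<bar>\<Sum>i\<in>{1..d}. a$i * v$i\<bar> < \<bar>a$0\<bar> * \<bar>v$0\<bar>"
    using assms by (intro key_ineq) (auto simp: beta_self_real)
  moreover have "a$0 * v$0 = (\<Sum>i\<in>{1..d}. a$i * v$i)" using assms(2) by (simp add: beta_def)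
  ultimately show False by (simp add: abs_mult)
qed

lemma Re_beta: fixes z w :: "complex vec"
  assumes "z \<in> carrier_vec (d+1)" "w \<in> carrier_vec (d+1)"
  shows "Re (beta d z w) = beta d (map_vec Re z) (map_vec Re w) - beta d (map_vec Im z) (map_vec Im w)"
  using assms by (simp add: beta_def sum_subtractf algebra_simps)

lemma Im_beta: fixes z w :: "complex vec"
  assumes "z \<in> carrier_vec (d+1)" "w \<in> carrier_vec (d+1)"
  shows "Im (beta d z w) = beta d (map_vec Re z) (map_vec Im w) + beta d (map_vec Im z) (map_vec Re w)"
  using assms by (simp add: beta_def sum_subtractf sum.distrib algebra_simps)

lemma beta_cvec: fixes x y :: "real vec"
  assumes "x \<in> carrier_vec (d+1)" "y \<in> carrier_vec (d+1)"
  shows "beta d (cvec x) (cvec y) = complex_of_real (beta d x y)"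
  using assms by (simp add: beta_def)



lemma beta_add_right: fixes u v w :: "'a::comm_ring_1 vec"
  assumes "u \<in> carrier_vec (d+1)" "v \<in> carrier_vec (d+1)"
  shows "beta d w (u + v) = beta d w u + beta d w v"
  using beta_add_left[OF assms] beta_sym by metis

lemma beta_minus_right: fixes u v w :: "'a::comm_ring_1 vec"
  assumes "u \<in> carrier_vec (d+1)" "v \<in> carrier_vec (d+1)"
  shows "beta d w (u - v) = beta d w u - beta d w v"
  using beta_minus_left[OF assms] beta_sym by metis

lemma beta_smult_right: fixes u w :: "'a::comm_ring_1 vec"
  assumes "u \<in> carrier_vec (d+1)"
  shows "beta d w (a \<cdot>\<^sub>v u) = a * beta d w u"
  using beta_smult_left[OF assms] beta_sym by metis

lemmas beta_lin = beta_add_left beta_add_right beta_minus_left beta_minus_right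
  beta_smult_left beta_smult_right

lemma cnj_mult_mat_vec: fixes A :: "complex mat"
  assumes "A \<in> carrier_mat n n" "v \<in> carrier_vec n"
  shows "map_mat cnj A *\<^sub>v v = map_vec cnj (A *\<^sub>v map_vec cnj v)"
  using assms by (intro eq_vecI) (auto simp: scalar_prod_def cnj_sum)

lemma Re_beta_cnj: fixes z w :: "complex vec"
  assumes "z \<in> carrier_vec (d+1)" "w \<in> carrier_vec (d+1)"
  shows "Re (beta d z (map_vec cnj w)) = beta d (map_vec Re z) (map_vec Re w) + beta d (map_vec Im z) (map_vec Im w)"
  using assms by (simp add: beta_def sum_subtractf sum.distrib algebra_simps)

lemma Im_beta_cnj: fixes z w :: "complex vec"
  assumes "z \<in> carrier_vec (d+1)" "w \<in> carrier_vec (d+1)"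
  shows "Im (beta d z (map_vec cnj w)) = beta d (map_vec Im z) (map_vec Re w) - beta d (map_vec Re z) (map_vec Im w)"
  using assms by (simp add: beta_def sum_subtractf sum.distrib algebra_simps)

lemma dir1: fixes x y :: "real vec"
  assumes x: "x \<in> dS d" and y: "y \<in> dS d" and G: "(cvec x, cvec y) \<in> GXi d"
  shows "beta d x y > -1"
proof -
  from G obtain g z w where g: "g \<in> GC d" and z: "z \<in> XiPlus d" and w: "w \<in> XiPlus d"
    and ex: "cvec x = g *\<^sub>v z" and ey: "cvec y = map_mat cnj g *\<^sub>v w"
    unfolding GXi_def by auto
  have gc: "g \<in> carrier_mat (d+1) (d+1)" and gb: "\<And>z w. z \<in> carrier_vec (d+1) \<Longrightarrow> w \<in> carrier_vec (d+1) \<Longrightarrow> beta d (g *\<^sub>v z) (g *\<^sub>v w) = beta d z w"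
    using g unfolding GC_def by auto
  have zc: "z \<in> carrier_vec (d+1)" and zz: "beta d z z = -1" and zv: "map_vec Im z \<in> Vplus d"
    using z unfolding XiPlus_def dSC_def by auto
  have wc: "w \<in> carrier_vec (d+1)" and ww: "beta d w w = -1" and wv: "map_vec Im w \<in> Vplus d"
    using w unfolding XiPlus_def dSC_def by auto
  have xc: "x \<in> carrier_vec (d+1)" and yc: "y \<in> carrier_vec (d+1)" and xx: "beta d x x = -1"
    using x y unfolding dS_def by auto
  define w' where "w' = map_vec cnj w"
  have w'c: "w' \<in> carrier_vec (d+1)" using wc by (simp add: w'_def)
  have "cvec y = map_vec cnj (g *\<^sub>v w')" unfolding ey w'_def
    by (rule cnj_mult_mat_vec[OF gc wc])
  hence "map_vec cnj (cvec y) = map_vec cnj (map_vec cnj (g *\<^sub>v w'))" by simp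
  also have "\<dots> = g *\<^sub>v w'" using gc by (intro eq_vecI) auto
  finally have gw0: "map_vec cnj (cvec y) = g *\<^sub>v w'" .
  have "map_vec cnj (cvec y) = cvec y" using yc by (intro eq_vecI) auto
  with gw0 have gw: "g *\<^sub>v w' = cvec y" by simp
  have "complex_of_real (beta d x y) = beta d (cvec x) (cvec y)" using xc yc by (simp add: beta_cvec)
  also have "\<dots> = beta d z w'" unfolding ex gw[symmetric] using zc w'c by (rule gb)
  finally have eq: "complex_of_real (beta d x y) = beta d z (map_vec cnj w)" by (simp add: w'_def)
  define a where "a = map_vec Re z"
  define b where "b = map_vec Im z"
  define c where "c = map_vec Re w"
  define e where "e = map_vec Im w"
  have ac: "a \<in> carrier_vec (d+1)" "b \<in> carrier_vec (d+1)" "c \<in> carrier_vec (d+1)" "e \<in> carrier_vec (d+1)"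
    using zc wc by (auto simp: a_def b_def c_def e_def)
  have r1: "beta d x y = beta d a c + beta d b e"
    using arg_cong[OF eq, of Re] Re_beta_cnj[OF zc wc] by (simp add: a_def b_def c_def e_def)
  have i1: "0 = beta d b c - beta d a e"
    using arg_cong[OF eq, of Im] Im_beta_cnj[OF zc wc] by (simp add: a_def b_def c_def e_def)
  have z1: "beta d a a - beta d b b = -1" using arg_cong[OF zz, of Re] Re_beta[OF zc zc]
    by (simp add: a_def b_def)
  have z2: "beta d a b + beta d b a = 0" using arg_cong[OF zz, of Im] Im_beta[OF zc zc]
    by (simp add: a_def b_def)
  have w1: "beta d c c - beta d e e = -1" using arg_cong[OF ww, of Re] Re_beta[OF wc wc]
    by (simp add: c_def e_def)
  have w2: "beta d c e + beta d e c = 0" using arg_cong[OF ww, of Im] Im_beta[OF wc wc]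
    by (simp add: c_def e_def)
  have ab: "beta d a b = 0" using z2 beta_sym[of d a b] by simp
  have ce: "beta d c e = 0" using w2 beta_sym[of d c e] by simp
  have bV: "b$0 > 0" "beta d b b > 0" using zv unfolding Vplus_def b_def by auto
  have eV: "e$0 > 0" "beta d e e > 0" using wv unfolding Vplus_def e_def by auto
  have be: "beta d b e > 0" by (rule cone_pos[OF bV(1) eV(1) bV(2) eV(2)])
  have VV: "beta d (b + e) (b + e) > 0"
    using be bV eV ac by (simp add: beta_lin beta_sym[of d e b])
  have AV: "beta d (a - c) (b + e) = 0"
    using ac ab ce i1 by (simp add: beta_lin beta_sym[of d c b])
  have AA: "beta d (a - c) (a - c) \<le> 0" using VV AV by (rule orth_spacelike)
  hence "beta d a a - 2 * beta d a c + beta d c c \<le> 0"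
    using ac by (simp add: beta_lin beta_sym[of d c a])
  hence "beta d a a - 2 * beta d a c + beta d c c - beta d (b + e) (b + e) < 0" using VV by linarith
  hence "beta d a a - 2 * beta d a c + beta d c c - (beta d b b + 2 * beta d b e + beta d e e) < 0"
    using ac by (simp add: beta_lin beta_sym[of d e b])
  thus ?thesis using r1 z1 w1 by linarith
qed



definition sg :: "nat \<Rightarrow> complex" where "sg j = (if j = 0 then 1 else -1)"

lemma beta_sg: fixes v w :: "complex vec"
  shows "beta d v w = (\<Sum>j<d+1. sg j * v$j * w$j)"
proof -
  have "{..<d+1} = insert 0 {1..d}" by auto
  hence "(\<Sum>j<d+1. sg j * v$j * w$j) = sg 0 * v$0 * w$0 + (\<Sum>j\<in>{1..d}. sg j * v$j * w$j)"
    by (simp add: sum.insert)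
  also have "(\<Sum>j\<in>{1..d}. sg j * v$j * w$j) = - (\<Sum>j\<in>{1..d}. v$j * w$j)"
    by (simp add: sg_def sum_negf)
  finally show ?thesis by (simp add: beta_def sg_def)
qed

definition Bv :: "nat \<Rightarrow> complex vec \<Rightarrow> complex vec \<Rightarrow> complex \<Rightarrow> complex \<Rightarrow> complex vec \<Rightarrow> complex vec" where
  "Bv d e f c s v = v + ((c-1) * beta d v e - s * beta d v f) \<cdot>\<^sub>v e + (s * beta d v e - (c-1) * beta d v f) \<cdot>\<^sub>v f"

definition Bm :: "nat \<Rightarrow> complex vec \<Rightarrow> complex vec \<Rightarrow> complex \<Rightarrow> complex \<Rightarrow> complex mat" where
  "Bm d e f c s = mat (d+1) (d+1) (\<lambda>(i,j). (if i = j then 1 else 0)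
     + sg j * (((c-1) * e$j - s * f$j) * e$i + (s * e$j - (c-1) * f$j) * f$i))"

lemma Bm_carrier: "Bm d e f c s \<in> carrier_mat (d+1) (d+1)" by (simp add: Bm_def)

lemma Bv_carrier: assumes "v \<in> carrier_vec (d+1)" "e \<in> carrier_vec (d+1)" "f \<in> carrier_vec (d+1)"
  shows "Bv d e f c s v \<in> carrier_vec (d+1)" using assms by (simp add: Bv_def)

lemma Bm_mult: assumes v: "v \<in> carrier_vec (d+1)" and e: "e \<in> carrier_vec (d+1)" and f: "f \<in> carrier_vec (d+1)"
  shows "Bm d e f c s *\<^sub>v v = Bv d e f c s v"
proof (rule eq_vecI)
  show "dim_vec (Bm d e f c s *\<^sub>v v) = dim_vec (Bv d e f c s v)" using assms by (simp add: Bm_def Bv_def)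
  fix i assume "i < dim_vec (Bv d e f c s v)"
  hence i: "i < d+1" using assms by (simp add: Bv_def)
  have "(Bm d e f c s *\<^sub>v v) $ i = (\<Sum>j<d+1. ((if i = j then 1 else 0)
     + sg j * (((c-1) * e$j - s * f$j) * e$i + (s * e$j - (c-1) * f$j) * f$i)) * v$j)"
    using i v by (simp add: Bm_def scalar_prod_def lessThan_atLeast0)
  also have "\<dots> = (\<Sum>j<d+1. (if i = j then 1 else 0) * v$j
     + e$i * (sg j * ((c-1) * e$j - s * f$j) * v$j) + f$i * (sg j * (s * e$j - (c-1) * f$j) * v$j))"
    by (intro sum.cong) (auto simp: algebra_simps)
  also have "\<dots> = (\<Sum>j<d+1. (if i = j then 1 else 0) * v$j)
     + e$i * (\<Sum>j<d+1. sg j * ((c-1) * e$j - s * f$j) * v$j)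
     + f$i * (\<Sum>j<d+1. sg j * (s * e$j - (c-1) * f$j) * v$j)"
    by (simp only: sum.distrib sum_distrib_left)
  also have "(\<Sum>j<d+1. (if i = j then 1 else 0) * v$j) = v$i" using i
    by (simp add: if_distrib[of "\<lambda>x. x * _"] cong: if_cong)
  also have "(\<Sum>j<d+1. sg j * ((c-1) * e$j - s * f$j) * v$j) = (c-1) * beta d v e - s * beta d v f"
    by (simp add: beta_sg sum_distrib_left sum_subtractf sum.distrib algebra_simps)
  also have "(\<Sum>j<d+1. sg j * (s * e$j - (c-1) * f$j) * v$j) = s * beta d v e - (c-1) * beta d v f"
    by (simp add: beta_sg sum_distrib_left sum_subtractf sum.distrib algebra_simps)
  finally show "(Bm d e f c s *\<^sub>v v) $ i = Bv d e f c s v $ i"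
    using i assms by (simp add: Bv_def algebra_simps)
qed



lemma Bv_beta:
  assumes v: "v \<in> carrier_vec (d+1)" and w: "w \<in> carrier_vec (d+1)"
    and e: "e \<in> carrier_vec (d+1)" and f: "f \<in> carrier_vec (d+1)"
    and ee: "beta d e e = 1" and ff: "beta d f f = -1" and ef: "beta d e f = 0"
    and cs: "c^2 - s^2 = 1"
  shows "beta d (Bv d e f c s v) (Bv d e f c s w) = beta d v w"
proof -
  define p where "p = beta d v e"
  define q where "q = beta d v f"
  define P where "P = beta d w e"
  define Q where "Q = beta d w f"
  define a where "a = (c-1) * p - s * q"
  define g where "g = s * p - (c-1) * q"
  define a' where "a' = (c-1) * P - s * Q"
  define g' where "g' = s * P - (c-1) * Q"
  have fe: "beta d f e = 0" using ef beta_sym by metis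
  have ew: "beta d e w = P" "beta d f w = Q" using beta_sym P_def Q_def by metis+
  have "beta d (Bv d e f c s v) (Bv d e f c s w) = beta d (v + a \<cdot>\<^sub>v e + g \<cdot>\<^sub>v f) (w + a' \<cdot>\<^sub>v e + g' \<cdot>\<^sub>v f)"
    by (simp add: Bv_def a_def g_def a'_def g'_def p_def q_def P_def Q_def)
  also have "\<dots> = beta d v w + a' * p + g' * q + a * P + a * a' + g * Q - g * g'"
    using v w e f ee ff ef fe ew by (simp add: beta_lin p_def[symmetric] q_def[symmetric] algebra_simps)
  also have "a' * p + g' * q + a * P + a * a' + g * Q - g * g' = (p*P - q*Q) * (c^2 - s^2 - 1)"
    by (simp add: a_def g_def a'_def g'_def power2_eq_square algebra_simps)
  hence "beta d v w + a' * p + g' * q + a * P + a * a' + g * Q - g * g' = beta d v w" using cs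
    by (simp add: algebra_simps)
  finally show ?thesis .
qed

lemma Bv_comp:
  assumes v: "v \<in> carrier_vec (d+1)"
    and e: "e \<in> carrier_vec (d+1)" and f: "f \<in> carrier_vec (d+1)"
    and ee: "beta d e e = 1" and ff: "beta d f f = -1" and ef: "beta d e f = 0"
  shows "Bv d e f c s (Bv d e f c' s' v) = Bv d e f (c*c' + s*s') (c*s' + s*c') v"
proof -
  define p where "p = beta d v e"
  define q where "q = beta d v f"
  define u where "u = Bv d e f c' s' v"
  have fe: "beta d f e = 0" using ef beta_sym by metis
  have uc: "u \<in> carrier_vec (d+1)" using Bv_carrier[OF v e f] by (simp add: u_def)
  have u: "u = v + ((c'-1) * p - s' * q) \<cdot>\<^sub>v e + (s' * p - (c'-1) * q) \<cdot>\<^sub>v f"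
    by (simp add: u_def Bv_def p_def q_def)
  have ue: "beta d u e = c' * p - s' * q" unfolding u using v e f ee ef fe
    by (simp add: beta_lin p_def[symmetric] algebra_simps)
  have uf: "beta d u f = c' * q - s' * p" unfolding u using v e f ff ef fe
    by (simp add: beta_lin q_def[symmetric] algebra_simps)
  have "Bv d e f c s u = u + ((c-1) * (c' * p - s' * q) - s * (c' * q - s' * p)) \<cdot>\<^sub>v e
      + (s * (c' * p - s' * q) - (c-1) * (c' * q - s' * p)) \<cdot>\<^sub>v f"
    by (simp add: Bv_def ue uf)
  also have "\<dots> = Bv d e f (c*c' + s*s') (c*s' + s*c') v"
  proof (rule eq_vecI)
    fix i assume "i < dim_vec (Bv d e f (c*c' + s*s') (c*s' + s*c') v)"
    hence i: "i < d+1" using v e f by (simp add: Bv_def)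
    show "(u + ((c-1) * (c' * p - s' * q) - s * (c' * q - s' * p)) \<cdot>\<^sub>v e
      + (s * (c' * p - s' * q) - (c-1) * (c' * q - s' * p)) \<cdot>\<^sub>v f) $ i
      = Bv d e f (c*c' + s*s') (c*s' + s*c') v $ i"
      using i v e f unfolding u by (simp add: Bv_def p_def[symmetric] q_def[symmetric] algebra_simps)
  qed (use v e f uc in \<open>simp add: Bv_def\<close>)
  finally show ?thesis by (simp add: u_def)
qed

lemma Bv_id: assumes "v \<in> carrier_vec (d+1)" "e \<in> carrier_vec (d+1)" "f \<in> carrier_vec (d+1)"
  shows "Bv d e f 1 0 v = v"
  using assms by (intro eq_vecI) (auto simp: Bv_def)

lemma Bm_cnj: assumes "e \<in> carrier_vec (d+1)" "f \<in> carrier_vec (d+1)"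
  shows "map_mat cnj (Bm d (cvec e) (cvec f) c s) = Bm d (cvec e) (cvec f) (cnj c) (cnj s)"
  using assms by (intro eq_matI) (auto simp: Bm_def sg_def)

definition Jm :: "nat \<Rightarrow> complex mat" where
  "Jm d = mat (d+1) (d+1) (\<lambda>(i,j). if i = j then sg i else 0)"

lemma beta_J: fixes z w :: "complex vec"
  assumes "z \<in> carrier_vec (d+1)" "w \<in> carrier_vec (d+1)"
  shows "beta d z w = z \<bullet> (Jm d *\<^sub>v w)"
proof -
  have "Jm d *\<^sub>v w = vec (d+1) (\<lambda>i. sg i * w$i)"
  proof (rule eq_vecI)
    fix i assume "i < dim_vec (vec (d+1) (\<lambda>i. sg i * w$i))"
    hence i: "i < d+1" by simp
    have "(Jm d *\<^sub>v w) $ i = (\<Sum>j<d+1. (if i = j then sg i else 0) * w$j)"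
      using i assms by (simp add: Jm_def scalar_prod_def lessThan_atLeast0)
    also have "\<dots> = sg i * w$i" using i
      by (simp add: if_distrib[of "\<lambda>x. x * _"] cong: if_cong)
    finally show "(Jm d *\<^sub>v w) $ i = vec (d+1) (\<lambda>i. sg i * w$i) $ i" using i by simp
  qed (simp add: Jm_def)
  thus ?thesis using assms
    by (simp add: beta_sg scalar_prod_def lessThan_atLeast0 algebra_simps)
qed

lemma det_sq: fixes g :: "complex mat"
  assumes g: "g \<in> carrier_mat (d+1) (d+1)"
    and pres: "\<And>z w. z \<in> carrier_vec (d+1) \<Longrightarrow> w \<in> carrier_vec (d+1) \<Longrightarrow> beta d (g *\<^sub>v z) (g *\<^sub>v w) = beta d z w"
  shows "det g * det g = 1"
proof -
  have J: "Jm d \<in> carrier_mat (d+1) (d+1)" by (simp add: Jm_def)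
  define M where "M = transpose_mat g * Jm d * g"
  have Mc: "M \<in> carrier_mat (d+1) (d+1)" using g J by (simp add: M_def)
  have Mv: "M *\<^sub>v w = Jm d *\<^sub>v w" if w: "w \<in> carrier_vec (d+1)" for w
  proof (rule eq_vecI)
    fix i assume "i < dim_vec (Jm d *\<^sub>v w)"
    hence i: "i < d+1" by (simp add: Jm_def)
    let ?z = "unit_vec (d+1) i"
    have gw: "g *\<^sub>v w \<in> carrier_vec (d+1)" using g w by simp
    have c1: "transpose_mat g * Jm d \<in> carrier_mat (d+1) (d+1)" using g J by auto
    have "M *\<^sub>v w = (transpose_mat g * Jm d) *\<^sub>v (g *\<^sub>v w)"
      unfolding M_def by (rule assoc_mult_mat_vec[OF c1 g w])
    also have "\<dots> = transpose_mat g *\<^sub>v (Jm d *\<^sub>v (g *\<^sub>v w))"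
      by (rule assoc_mult_mat_vec[of _ "d+1" "d+1" _ "d+1"]) (use g J gw in auto)
    finally have "M *\<^sub>v w = transpose_mat g *\<^sub>v (Jm d *\<^sub>v (g *\<^sub>v w))" .
    hence "?z \<bullet> (M *\<^sub>v w) = ?z \<bullet> (transpose_mat g *\<^sub>v (Jm d *\<^sub>v (g *\<^sub>v w)))" by simp
    also have "\<dots> = (transpose_mat g *\<^sub>v (Jm d *\<^sub>v (g *\<^sub>v w))) \<bullet> ?z"
      using g J gw by (intro comm_scalar_prod[of _ "d+1"]) auto
    also have "\<dots> = (Jm d *\<^sub>v (g *\<^sub>v w)) \<bullet> (g *\<^sub>v ?z)"
      using g J gw by (intro transpose_vec_mult_scalar) auto
    also have "\<dots> = (g *\<^sub>v ?z) \<bullet> (Jm d *\<^sub>v (g *\<^sub>v w))"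
      using g J gw by (intro comm_scalar_prod[of _ "d+1"]) auto
    also have "\<dots> = beta d (g *\<^sub>v ?z) (g *\<^sub>v w)" using g gw by (simp add: beta_J)
    also have "\<dots> = beta d ?z w" using w by (simp add: pres)
    also have "\<dots> = ?z \<bullet> (Jm d *\<^sub>v w)" using w by (simp add: beta_J)
    finally have "?z \<bullet> (M *\<^sub>v w) = ?z \<bullet> (Jm d *\<^sub>v w)" .
    thus "(M *\<^sub>v w) $ i = (Jm d *\<^sub>v w) $ i" using i Mc J w by simp
  qed (use Mc J in simp)
  have MJ: "M = Jm d"
  proof (rule eq_matI)
    fix i j assume "i < dim_row (Jm d)" "j < dim_col (Jm d)"
    hence i: "i < d+1" and j: "j < d+1" by (auto simp: Jm_def)
    have "M $$ (i,j) = (M *\<^sub>v unit_vec (d+1) j) $ i" using Mc i j by simp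
    also have "\<dots> = (Jm d *\<^sub>v unit_vec (d+1) j) $ i" by (simp add: Mv)
    also have "\<dots> = Jm d $$ (i,j)" using J i j by simp
    finally show "M $$ (i,j) = Jm d $$ (i,j)" .
  qed (use Mc J in auto)
  have dJ: "det (Jm d) \<noteq> 0"
  proof -
    have "upper_triangular (Jm d)" by (auto simp: upper_triangular_def Jm_def)
    hence "det (Jm d) = prod_list (diag_mat (Jm d))" using J by (rule det_upper_triangular)
    moreover have "0 \<notin> set (diag_mat (Jm d))" by (auto simp: diag_mat_def Jm_def sg_def)
    ultimately show ?thesis by (simp add: prod_list_zero_iff)
  qed
  have "det M = det g * det (Jm d) * det g" unfolding M_def using g J
    by (simp add: det_mult[of _ "d+1"] det_transpose)
  hence "det g * det g * det (Jm d) = 1 * det (Jm d)" using MJ by (simp add: algebra_simps)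
  thus ?thesis using dJ by (meson mult_right_cancel)
qed



lemma mat_unit_entry: fixes A :: "'a::semiring_1 mat"
  assumes "A \<in> carrier_mat n n" "i < n" "j < n"
  shows "(A *\<^sub>v unit_vec n j) $ i = A $$ (i,j)"
  using assms by simp

lemma Bm_GC:
  assumes e: "e \<in> carrier_vec (d+1)" and f: "f \<in> carrier_vec (d+1)"
    and ee: "beta d e e = 1" and ff: "beta d f f = -1" and ef: "beta d e f = 0"
    and cs': "c'^2 - s'^2 = 1" and c: "c = c'*c' + s'*s'" and s: "s = c'*s' + s'*c'"
  shows "Bm d e f c s \<in> GC d"
proof -
  have cs: "c^2 - s^2 = 1"
  proof -
    have "c^2 - s^2 = (c'^2 - s'^2)^2" unfolding c s by (simp add: power2_eq_square algebra_simps)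
    thus ?thesis using cs' by simp
  qed
  let ?K = "Bm d e f c' s'"
  have K: "?K \<in> carrier_mat (d+1) (d+1)" by (rule Bm_carrier)
  have KK: "?K * ?K = Bm d e f c s"
  proof (rule eq_matI)
    fix i j assume "i < dim_row (Bm d e f c s)" "j < dim_col (Bm d e f c s)"
    hence i: "i < d+1" and j: "j < d+1" by (auto simp: Bm_def)
    let ?u = "unit_vec (d+1) j"
    have uc: "?u \<in> carrier_vec (d+1)" by simp
    have KKc: "?K * ?K \<in> carrier_mat (d+1) (d+1)" using K by simp
    have "(?K * ?K) $$ (i,j) = ((?K * ?K) *\<^sub>v ?u) $ i" using mat_unit_entry[OF KKc i j] by simp
    also have "(?K * ?K) *\<^sub>v ?u = ?K *\<^sub>v (?K *\<^sub>v ?u)" by (rule assoc_mult_mat_vec[OF K K uc])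
    also have "\<dots> = Bv d e f c' s' (Bv d e f c' s' ?u)"
      using Bm_mult[OF uc e f] Bm_mult[OF Bv_carrier[OF uc e f] e f] by simp
    also have "\<dots> = Bv d e f c s ?u" unfolding c s using uc e f ee ff ef by (rule Bv_comp)
    also have "\<dots> = Bm d e f c s *\<^sub>v ?u" using Bm_mult[OF uc e f] by simp
    also have "\<dots> $ i = Bm d e f c s $$ (i,j)" using mat_unit_entry[OF Bm_carrier i j] .
    finally show "(?K * ?K) $$ (i,j) = Bm d e f c s $$ (i,j)" .
  qed (auto simp: Bm_def)
  have presK: "beta d (?K *\<^sub>v z) (?K *\<^sub>v w) = beta d z w"
    if "z \<in> carrier_vec (d+1)" "w \<in> carrier_vec (d+1)" for z w
    using that e f by (simp add: Bm_mult Bv_beta ee ff ef cs')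
  have "det ?K * det ?K = 1" using K presK by (rule det_sq)
  hence "det (Bm d e f c s) = 1" unfolding KK[symmetric] using K by (simp add: det_mult)
  moreover have "beta d (Bm d e f c s *\<^sub>v z) (Bm d e f c s *\<^sub>v w) = beta d z w"
    if "z \<in> carrier_vec (d+1)" "w \<in> carrier_vec (d+1)" for z w
    using that e f by (simp add: Bm_mult Bv_beta ee ff ef cs)
  ultimately show ?thesis unfolding GC_def using Bm_carrier by blast
qed



lemma dir2_core: fixes x y m e f :: "real vec" and N P :: real
  assumes xc: "x \<in> carrier_vec (d+1)" and yc: "y \<in> carrier_vec (d+1)" and mc: "m \<in> carrier_vec (d+1)"
    and ec: "e \<in> carrier_vec (d+1)" and fc: "f \<in> carrier_vec (d+1)"
    and xx: "beta d x x = -1" and yy: "beta d y y = -1"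
    and ee: "beta d e e = 1" and ff: "beta d f f = -1" and ef: "beta d e f = 0" and mf: "beta d m f = 0"
    and xd: "x = m + (N/2) \<cdot>\<^sub>v f" and yd: "y = m - (N/2) \<cdot>\<^sub>v f"
    and Pdef: "P = beta d m e" and PN: "P^2 < (N/2)^2"
    and pos: "((N/2) \<cdot>\<^sub>v e + P \<cdot>\<^sub>v f) $ 0 > 0"
  shows "(cvec x, cvec y) \<in> GXi d"
proof -
  have fe: "beta d f e = 0" using ef beta_sym by metis
  have xe: "beta d x e = P" unfolding xd using mc fc ec fe Pdef by (simp add: beta_lin)
  have xf: "beta d x f = -(N/2)" unfolding xd using mc fc ec ff mf by (simp add: beta_lin)
  have ye: "beta d y e = P" unfolding yd using mc fc ec fe Pdef by (simp add: beta_lin)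
  have yf: "beta d y f = N/2" unfolding yd using mc fc ec ff mf by (simp add: beta_lin)
  define E where "E = cvec e"
  define F where "F = cvec f"
  define X where "X = cvec x"
  define Y where "Y = cvec y"
  have Ec: "E \<in> carrier_vec (d+1)" and Fc: "F \<in> carrier_vec (d+1)"
    and Xc: "X \<in> carrier_vec (d+1)" and Yc: "Y \<in> carrier_vec (d+1)"
    using ec fc xc yc by (auto simp: E_def F_def X_def Y_def)
  have EE: "beta d E E = 1" using beta_cvec[OF ec ec] ee by (simp add: E_def)
  have FF: "beta d F F = -1" using beta_cvec[OF fc fc] ff by (simp add: F_def)
  have EF: "beta d E F = 0" using beta_cvec[OF ec fc] ef by (simp add: E_def F_def)
  have XX: "beta d X X = -1" using beta_cvec[OF xc xc] xx by (simp add: X_def)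
  have YY: "beta d Y Y = -1" using beta_cvec[OF yc yc] yy by (simp add: Y_def)
  have XE: "beta d X E = of_real P" using beta_cvec[OF xc ec] xe by (simp add: X_def E_def)
  have XF: "beta d X F = - of_real (N/2)" using beta_cvec[OF xc fc] xf by (simp add: X_def F_def)
  have YE: "beta d Y E = of_real P" using beta_cvec[OF yc ec] ye by (simp add: Y_def E_def)
  have YF: "beta d Y F = of_real (N/2)" using beta_cvec[OF yc fc] yf by (simp add: Y_def F_def)
  have Xj: "\<And>j. j < d+1 \<Longrightarrow> X $ j = of_real (x $ j)" using xc by (simp add: X_def)
  have Yj: "\<And>j. j < d+1 \<Longrightarrow> Y $ j = of_real (y $ j)" using yc by (simp add: Y_def)
  have Ej: "\<And>j. j < d+1 \<Longrightarrow> E $ j = of_real (e $ j)" using ec by (simp add: E_def)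
  have Fj: "\<And>j. j < d+1 \<Longrightarrow> F $ j = of_real (f $ j)" using fc by (simp add: F_def)
  define h :: real where "h = 1 / sqrt 2"
  have h2: "h * h = 1/2" by (simp add: h_def)
  have h2c: "complex_of_real h * complex_of_real h = 1/2"
    by (metis h2 of_real_divide of_real_mult of_real_1 of_real_numeral)
  define g where "g = Bm d E F 0 (-\<i>)"
  have gGC: "g \<in> GC d" unfolding g_def
  proof (rule Bm_GC[OF Ec Fc EE FF EF, of "of_real h" "-\<i> * of_real h"])
    show "(complex_of_real h)\<^sup>2 - (- \<i> * complex_of_real h)\<^sup>2 = 1"
      using h2c by (simp add: power2_eq_square algebra_simps)
    show "0 = complex_of_real h * complex_of_real h + - \<i> * complex_of_real h * (- \<i> * complex_of_real h)"
      using h2c by (simp add: algebra_simps)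
    show "- \<i> = complex_of_real h * (- \<i> * complex_of_real h) + - \<i> * complex_of_real h * complex_of_real h"
      using h2c by (simp add: algebra_simps)
  qed
  define z where "z = Bv d E F 0 \<i> X"
  define w where "w = Bv d E F 0 (-\<i>) Y"
  have zc: "z \<in> carrier_vec (d+1)" unfolding z_def by (rule Bv_carrier[OF Xc Ec Fc])
  have wc: "w \<in> carrier_vec (d+1)" unfolding w_def by (rule Bv_carrier[OF Yc Ec Fc])
  have gz: "g *\<^sub>v z = X"
  proof -
    have "g *\<^sub>v z = Bv d E F 0 (-\<i>) (Bv d E F 0 \<i> X)" unfolding g_def z_def
      by (rule Bm_mult[OF Bv_carrier[OF Xc Ec Fc] Ec Fc])
    also have "\<dots> = Bv d E F (0*0 + (-\<i>)*\<i>) (0*\<i> + (-\<i>)*0) X"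
      by (rule Bv_comp[OF Xc Ec Fc EE FF EF])
    also have "\<dots> = X" using Bv_id[OF Xc Ec Fc] by simp
    finally show ?thesis .
  qed
  have cg: "map_mat cnj g = Bm d E F 0 \<i>" unfolding g_def E_def F_def
    using Bm_cnj[OF ec fc, of 0 "-\<i>"] by simp
  have hw: "map_mat cnj g *\<^sub>v w = Y"
  proof -
    have "map_mat cnj g *\<^sub>v w = Bv d E F 0 \<i> (Bv d E F 0 (-\<i>) Y)" unfolding cg w_def
      by (rule Bm_mult[OF Bv_carrier[OF Yc Ec Fc] Ec Fc])
    also have "\<dots> = Bv d E F (0*0 + \<i>*(-\<i>)) (0*(-\<i>) + \<i>*0) Y"
      by (rule Bv_comp[OF Yc Ec Fc EE FF EF])
    also have "\<dots> = Y" using Bv_id[OF Yc Ec Fc] by simp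
    finally show ?thesis .
  qed
  define a where "a = (N/2) \<cdot>\<^sub>v e + P \<cdot>\<^sub>v f"
  define b where "b = (N/2) \<cdot>\<^sub>v e - P \<cdot>\<^sub>v f"
  have ac: "a \<in> carrier_vec (d+1)" and bc: "b \<in> carrier_vec (d+1)" using ec fc by (auto simp: a_def b_def)
  have aa: "beta d a a = (N/2)^2 - P^2" unfolding a_def using ec fc ee ff ef fe
    by (simp add: beta_lin power2_eq_square algebra_simps)
  have bb: "beta d b b = (N/2)^2 - P^2" unfolding b_def using ec fc ee ff ef fe
    by (simp add: beta_lin power2_eq_square algebra_simps)
  have ab: "beta d a b = (N/2)^2 + P^2" unfolding a_def b_def using ec fc ee ff ef fe
    by (simp add: beta_lin power2_eq_square algebra_simps)
  have a0: "a $ 0 > 0" using pos by (simp add: a_def)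
  have aap: "beta d a a > 0" and bbp: "beta d b b > 0" using aa bb PN by auto
  have b0: "b $ 0 > 0"
  proof (rule ccontr)
    assume "\<not> ?thesis"
    moreover have "b $ 0 \<noteq> 0" using bbp by (rule timelike0)
    ultimately have n1: "((-1) \<cdot>\<^sub>v b) $ 0 > 0" using bc by simp
    have n2: "beta d ((-1) \<cdot>\<^sub>v b) ((-1) \<cdot>\<^sub>v b) > 0" using bbp bc by (simp add: beta_lin)
    have "beta d a ((-1) \<cdot>\<^sub>v b) > 0" by (rule cone_pos[OF a0 n1 aap n2])
    hence "beta d a b < 0" using bc by (simp add: beta_lin)
    moreover have "beta d a b \<ge> 0" unfolding ab by simp
    ultimately show False by simp
  qed
  have imz: "map_vec Im z = a"
  proof (rule eq_vecI)
    fix j assume "j < dim_vec a"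
    hence j: "j < d+1" using ac by simp
    show "map_vec Im z $ j = a $ j"
      using j Xc Ec Fc zc ec fc unfolding z_def a_def
      by (simp add: Bv_def XE XF Xj Ej Fj)
  qed (use zc ac in simp)
  have imw: "map_vec Im w = b"
  proof (rule eq_vecI)
    fix j assume "j < dim_vec b"
    hence j: "j < d+1" using bc by simp
    show "map_vec Im w $ j = b $ j"
      using j Yc Ec Fc wc ec fc unfolding w_def b_def
      by (simp add: Bv_def YE YF Yj Ej Fj)
  qed (use wc bc in simp)
  have zX: "z \<in> XiPlus d"
  proof -
    have "beta d z z = -1" unfolding z_def using Bv_beta[OF Xc Xc Ec Fc EE FF EF] XX by simp
    moreover have "map_vec Im z \<in> Vplus d" unfolding imz Vplus_def using ac a0 aap by simp
    ultimately show ?thesis using zc unfolding XiPlus_def dSC_def by simp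
  qed
  have wX: "w \<in> XiPlus d"
  proof -
    have "beta d w w = -1" unfolding w_def using Bv_beta[OF Yc Yc Ec Fc EE FF EF] YY by simp
    moreover have "map_vec Im w \<in> Vplus d" unfolding imw Vplus_def using bc b0 bbp by simp
    ultimately show ?thesis using wc unfolding XiPlus_def dSC_def by simp
  qed
  have "(X, Y) = (g *\<^sub>v z, map_mat cnj g *\<^sub>v w)" using gz hw by simp
  hence "(X, Y) \<in> GXi d" unfolding GXi_def using gGC zX wX by blast
  thus ?thesis by (simp add: X_def Y_def)
qed



lemma dir2: fixes x y :: "real vec"
  assumes x: "x \<in> dS d" and y: "y \<in> dS d" and gt: "beta d x y > -1"
  shows "(cvec x, cvec y) \<in> GXi d"
proof -
  have xc: "x \<in> carrier_vec (d+1)" and yc: "y \<in> carrier_vec (d+1)" and xx: "beta d x x = -1"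
    and yy: "beta d y y = -1" using x y unfolding dS_def by auto
  define c where "c = beta d x y"
  have yx: "beta d y x = c" using beta_sym c_def by metis
  define N where "N = sqrt (2 + 2*c)"
  have Npos: "N > 0" using gt by (simp add: N_def c_def)
  have N2: "N * N = 2 + 2*c" using gt by (simp add: N_def c_def)
  define f where "f = (1/N) \<cdot>\<^sub>v (x - y)"
  define m where "m = (1/2::real) \<cdot>\<^sub>v (x + y)"
  have fc: "f \<in> carrier_vec (d+1)" and mc: "m \<in> carrier_vec (d+1)" using xc yc by (auto simp: f_def m_def)
  have ff: "beta d f f = -1"
  proof -
    have "beta d f f = (1/N) * (1/N) * (beta d x x - beta d x y - beta d y x + beta d y y)"
      unfolding f_def using xc yc by (simp add: beta_lin algebra_simps)
    also have "\<dots> = -1" using N2 Npos xx yy yx gt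
      by (simp add: c_def[symmetric] field_simps)
    finally show ?thesis .
  qed
  have mf: "beta d m f = 0"
  proof -
    have "beta d m f = (1/2) * (1/N) * (beta d x x - beta d x y + beta d y x - beta d y y)"
      unfolding f_def m_def using xc yc by (simp add: beta_lin algebra_simps)
    thus ?thesis using xx yy yx by (simp add: c_def)
  qed
  define A where "A = beta d m m"
  have mm: "A = (c - 1)/2"
  proof -
    have "A = (1/2) * (1/2) * (beta d x x + beta d x y + beta d y x + beta d y y)"
      unfolding A_def m_def using xc yc by (simp add: beta_lin algebra_simps)
    thus ?thesis using xx yy yx by (simp add: c_def)
  qed
  have Agt: "A + 1 > 0" using gt mm by (simp add: c_def)
  have AN: "A + 1 = (N/2)^2" using mm N2 by (simp add: power2_eq_square field_simps)
  have xd: "x = m + (N/2) \<cdot>\<^sub>v f"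
    using xc yc Npos by (intro eq_vecI) (auto simp: m_def f_def field_simps)
  have yd: "y = m - (N/2) \<cdot>\<^sub>v f"
    using xc yc Npos by (intro eq_vecI) (auto simp: m_def f_def field_simps)
  define e0 :: "real vec" where "e0 = unit_vec (d+1) 0"
  have e0c: "e0 \<in> carrier_vec (d+1)" by (simp add: e0_def)
  have e0f: "beta d e0 f = f $ 0" using fc by (simp add: beta_def e0_def)
  have fe0: "beta d f e0 = f $ 0" using e0f beta_sym by metis
  have e0e0: "beta d e0 e0 = 1" by (simp add: beta_def e0_def)
  define t where "t = e0 + (f $ 0) \<cdot>\<^sub>v f"
  have tc: "t \<in> carrier_vec (d+1)" using e0c fc by (simp add: t_def)
  have tf: "beta d t f = 0" unfolding t_def using e0c fc e0f ff by (simp add: beta_lin)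
  define C where "C = beta d t t"
  have Cv: "C = 1 + (f $ 0)^2" unfolding C_def t_def using e0c fc e0f fe0 ff e0e0
    by (simp add: beta_lin power2_eq_square algebra_simps)
  define B where "B = beta d m t"
  have tm: "beta d t m = B" using beta_sym B_def by metis
  define wv where "wv = t + B \<cdot>\<^sub>v m"
  have wc: "wv \<in> carrier_vec (d+1)" using tc mc by (simp add: wv_def)
  have wf: "beta d wv f = 0" unfolding wv_def using tc mc tf mf by (simp add: beta_lin)
  have mw: "beta d m wv = B + B * A" unfolding wv_def using tc mc
    by (simp add: beta_lin B_def[symmetric] A_def[symmetric])
  define W where "W = beta d wv wv"
  have Wv: "W = C + 2*B*B + B*B*A" unfolding W_def wv_def using tc mc
    by (simp add: beta_lin B_def[symmetric] A_def[symmetric] C_def[symmetric] tm algebra_simps)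
  have Wpos: "W > 0"
  proof -
    have "W = C + B*B*(A+2)" using Wv by (simp add: algebra_simps)
    moreover have "B*B*(A+2) \<ge> 0" using Agt by simp
    moreover have "C > 0" using Cv by (simp add: add_pos_nonneg)
    ultimately show ?thesis by linarith
  qed
  have Q: "(B + B*A)^2 < (A+1) * W"
  proof -
    have "(A+1) * W - (B + B*A)^2 = (A+1) * (C + B^2)" using Wv by (simp add: power2_eq_square algebra_simps)
    moreover have "C + B^2 > 0" using Cv by (simp add: add_pos_nonneg)
    ultimately have "(A+1) * W - (B + B*A)^2 > 0" using Agt by simp
    thus ?thesis by simp
  qed
  define e1 where "e1 = (1 / sqrt W) \<cdot>\<^sub>v wv"
  have e1c: "e1 \<in> carrier_vec (d+1)" using wc by (simp add: e1_def)
  have e1e1: "beta d e1 e1 = 1" unfolding e1_def using wc Wpos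
    by (simp add: beta_lin W_def[symmetric])
  have e1f: "beta d e1 f = 0" unfolding e1_def using wc wf by (simp add: beta_lin)
  define P1 where "P1 = beta d m e1"
  have P1v: "P1 = (B + B*A) / sqrt W" unfolding P1_def e1_def using wc mw by (simp add: beta_lin)
  have P1N: "P1^2 < (N/2)^2"
  proof -
    have "P1^2 = (B + B*A)^2 / W" using Wpos by (simp add: P1v power_divide)
    also have "\<dots> < A + 1" using Q Wpos by (simp add: divide_less_eq mult.commute)
    finally show ?thesis using AN by simp
  qed
  define a1 where "a1 = (N/2) \<cdot>\<^sub>v e1 + P1 \<cdot>\<^sub>v f"
  have a1c: "a1 \<in> carrier_vec (d+1)" using e1c fc by (simp add: a1_def)
  have fe1: "beta d f e1 = 0" using e1f beta_sym by metis
  have "beta d a1 a1 = (N/2)^2 - P1^2" unfolding a1_def using e1c fc e1e1 ff e1f fe1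
    by (simp add: beta_lin power2_eq_square)
  hence "beta d a1 a1 > 0" using P1N by simp
  hence a10: "a1 $ 0 \<noteq> 0" by (rule timelike0)
  show ?thesis
  proof (cases "a1 $ 0 > 0")
    case True
    show ?thesis
      by (rule dir2_core[OF xc yc mc e1c fc xx yy e1e1 ff e1f mf xd yd P1_def P1N])
        (use True in \<open>simp add: a1_def\<close>)
  next
    case False
    hence neg: "a1 $ 0 < 0" using a10 by simp
    define e where "e = (-1) \<cdot>\<^sub>v e1"
    have ec: "e \<in> carrier_vec (d+1)" using e1c by (simp add: e_def)
    have ee: "beta d e e = 1" unfolding e_def using e1c e1e1 by (simp add: beta_lin)
    have ef: "beta d e f = 0" unfolding e_def using e1c e1f by (simp add: beta_lin)
    have Pe: "beta d m e = - P1" unfolding e_def P1_def using e1c by (simp add: beta_lin)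
    have PN: "(beta d m e)^2 < (N/2)^2" using P1N Pe by simp
    have pos: "((N/2) \<cdot>\<^sub>v e + (beta d m e) \<cdot>\<^sub>v f) $ 0 > 0"
      using neg e1c fc Pe unfolding e_def a1_def by simp
    show ?thesis
      by (rule dir2_core[OF xc yc mc ec fc xx yy ee ff ef mf xd yd refl PN pos])
  qed
qed



theorem mainTheorem5:
  fixes d :: nat
  assumes "d \<ge> 1"
  shows "(\<forall>x \<in> dS d. \<forall>y \<in> dS d.
            ((cvec x, cvec y) \<in> GXi d \<longleftrightarrow> beta d x y > -1)
          \<and> (beta d x y > -1 \<longleftrightarrow> beta d (x - y) (x - y) < 0))
       \<and> {x \<in> dS d. (cvec x, cvec (unit_vec (d+1) 1)) \<in> GXi d} = {x \<in> dS d. x $ 1 < 1}"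
proof -
  have P1: "((cvec x, cvec y) \<in> GXi d \<longleftrightarrow> beta d x y > -1)
          \<and> (beta d x y > -1 \<longleftrightarrow> beta d (x - y) (x - y) < 0)" if x: "x \<in> dS d" and y: "y \<in> dS d" for x y
  proof
    show "(cvec x, cvec y) \<in> GXi d \<longleftrightarrow> beta d x y > -1" using dir1[OF x y] dir2[OF x y] by blast
    have xc: "x \<in> carrier_vec (d+1)" and yc: "y \<in> carrier_vec (d+1)" and xx: "beta d x x = -1"
      and yy: "beta d y y = -1" using x y unfolding dS_def by auto
    have "beta d (x - y) (x - y) = beta d x x - beta d x y - beta d y x + beta d y y"
      using xc yc by (simp add: beta_lin algebra_simps)
    also have "\<dots> = -2 - 2 * beta d x y" using xx yy beta_sym[of d y x] by simp
    finally show "beta d x y > -1 \<longleftrightarrow> beta d (x - y) (x - y) < 0" by simp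
  qed
  define u :: "real vec" where "u = unit_vec (d+1) 1"
  have uc: "u \<in> carrier_vec (d+1)" by (simp add: u_def)
  have "(\<Sum>i\<in>{1..d}. u $ i * u $ i) = (\<Sum>i\<in>{1..d}. if i = 1 then 1 else 0)"
    by (intro sum.cong) (use assms in \<open>auto simp: u_def\<close>)
  also have "\<dots> = 1" using assms by simp
  moreover have "u $ 0 = 0" using assms by (simp add: u_def)
  ultimately have "beta d u u = -1" by (simp add: beta_def)
  hence uS: "u \<in> dS d" using uc by (simp add: dS_def)
  have xu: "beta d x u = - (x $ 1)" if "x \<in> carrier_vec (d+1)" for x
  proof -
    have "(\<Sum>i\<in>{1..d}. x $ i * u $ i) = (\<Sum>i\<in>{1..d}. if i = 1 then x $ 1 else 0)"
      by (intro sum.cong) (use assms in \<open>auto simp: u_def\<close>)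
    also have "\<dots> = x $ 1" using assms by simp
    moreover have "u $ 0 = 0" using assms by (simp add: u_def)
    ultimately show ?thesis by (simp add: beta_def)
  qed
  have "{x \<in> dS d. (cvec x, cvec u) \<in> GXi d} = {x \<in> dS d. x $ 1 < 1}"
  proof (intro Collect_cong conj_cong refl)
    fix x assume "x \<in> dS d"
    hence "(cvec x, cvec u) \<in> GXi d \<longleftrightarrow> beta d x u > -1" using P1 uS by blast
    also have "\<dots> \<longleftrightarrow> x $ 1 < 1" using xu \<open>x \<in> dS d\<close> by (simp add: dS_def)
    finally show "(cvec x, cvec u) \<in> GXi d \<longleftrightarrow> x $ 1 < 1" .
  qed
  thus ?thesis using P1 by (simp add: u_def)
qed


end
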